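(* Let $p$ be a prime, $\mathcal{V}=\mathbb{F}_p^n$, and let $\mathcal{V}$ act on $\mathbb{Z}^{\mathcal{V}}$ by $u\cdot e_v=e_{u+v}$ (translation of the standard basis). Let $x=\sum_{v\in\mathcal{V}}x_ve_v\in\mathbb{Z}^{\mathcal{V}}$ and assume either $p$ is odd or $\sum_{v\in\mathcal{V}}x_v$ is divisible by $4$. If the stabilizer $\operatorname{Stab}_{\mathcal{V}}(x)$ is nontrivial, then $\sum_{v\in\mathcal{V}}x_v v=0$ in $\mathcal{V}$. In particular, if $\sum_v x_v=0$ and $\sum_v x_vv\neq0$, then $\operatorname{Stab}_{\mathcal{V}}(x)=\{0\}$.
   Context: $\mathbb{Z}^{\mathcal{V}}$ is the free abelian group with standard basis $\{e_v\}_{v\in\mathcal{V}}$; in $\sum_v x_vv$ the integers $x_v$ act on $\mathcal{V}$ via reduction mod $p$. *)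

theory Defs
  imports "HOL-Computational_Algebra.Primes"
begin

text \<open>The vector space V = F_p^n is modelled by the explicit carrier of
  coordinate functions nat => int with coordinates i < n in {0..p-1}
  and coordinates i >= n equal to 0; addition is coordinatewise mod p.\<close>

definition Fpn :: "nat \<Rightarrow> nat \<Rightarrow> (nat \<Rightarrow> int) set" where
  "Fpn p n = {v. (\<forall>i<n. 0 \<le> v i \<and> v i < int p) \<and> (\<forall>i\<ge>n. v i = 0)}"

definition vzero :: "nat \<Rightarrow> int" where
  "vzero = (\<lambda>i. 0)"

definition vadd :: "nat \<Rightarrow> (nat \<Rightarrow> int) \<Rightarrow> (nat \<Rightarrow> int) \<Rightarrow> (nat \<Rightarrow> int)" where
  "vadd p u v = (\<lambda>i. (u i + v i) mod int p)"

text \<open>An element x = sum_v x_v e_v of Z^V is given by its coefficient function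
  (only values on Fpn p n matter). Translation: u . x = sum_v x_v e_(u+v);
  so u . x = x iff x_(u+v) = x_v for all v.\<close>

definition translate :: "nat \<Rightarrow> nat \<Rightarrow> (nat \<Rightarrow> int) \<Rightarrow> ((nat \<Rightarrow> int) \<Rightarrow> int) \<Rightarrow> ((nat \<Rightarrow> int) \<Rightarrow> int)" where
  "translate p n u x = (\<lambda>w. if w \<in> Fpn p n then (\<Sum>v\<in>{v\<in>Fpn p n. vadd p u v = w}. x v) else 0)"

definition Stab :: "nat \<Rightarrow> nat \<Rightarrow> ((nat \<Rightarrow> int) \<Rightarrow> int) \<Rightarrow> (nat \<Rightarrow> int) set" where
  "Stab p n x = {u \<in> Fpn p n. \<forall>w\<in>Fpn p n. translate p n u x w = x w}"

definition wsum :: "nat \<Rightarrow> nat \<Rightarrow> ((nat \<Rightarrow> int) \<Rightarrow> int) \<Rightarrow> (nat \<Rightarrow> int)" where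
  "wsum p n x = (\<lambda>i. (\<Sum>v\<in>Fpn p n. x v * v i) mod int p)"

end

theory Submission imports Defs "HOL-Number_Theory.Number_Theory" begin

lemma Fpn_mod: "v \<in> Fpn p n \<Longrightarrow> p > 0 \<Longrightarrow> v i mod int p = v i"
  unfolding Fpn_def by (cases "i < n") auto

lemma Fpn_fin: "finite (Fpn p n)"
proof -
  have "Fpn p n \<subseteq> (\<lambda>f i. if i < n then f i else 0) ` ({..<n} \<rightarrow>\<^sub>E {0..<int p})"
  proof
    fix v assume v: "v \<in> Fpn p n"
    show "v \<in> (\<lambda>f i. if i < n then f i else 0) ` ({..<n} \<rightarrow>\<^sub>E {0..<int p})"
      apply (rule image_eqI[where x="restrict v {..<n}"])
      using v by (auto simp: Fpn_def fun_eq_iff)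
  qed
  then show ?thesis by (rule finite_subset) (auto intro: finite_PiE)
qed

lemma vadd_Fpn: assumes "p > 0" "u \<in> Fpn p n" "v \<in> Fpn p n" shows "vadd p u v \<in> Fpn p n"
proof -
  have "int p > 0" using assms(1) by simp
  then show ?thesis using assms(2,3) unfolding Fpn_def vadd_def by auto
qed

lemma vadd_cancel: "p > 0 \<Longrightarrow> v \<in> Fpn p n \<Longrightarrow> v' \<in> Fpn p n \<Longrightarrow> vadd p u v = vadd p u v' \<Longrightarrow> v = v'"
proof
  fix i assume p: "p > 0" and v: "v \<in> Fpn p n" and v': "v' \<in> Fpn p n" and e: "vadd p u v = vadd p u v'"
  have "(u i + v i) mod p = (u i + v' i) mod p" using e unfolding vadd_def by meson
  then have "(u i + v i - u i) mod p = (u i + v' i - u i) mod p" by (metis mod_diff_left_eq)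
  then show "v i = v' i" using Fpn_mod[OF v p] Fpn_mod[OF v' p] by simp
qed

lemma translate_single: "p > 0 \<Longrightarrow> u \<in> Fpn p n \<Longrightarrow> v \<in> Fpn p n \<Longrightarrow>
   translate p n u x (vadd p u v) = x v"
proof -
  assume p: "p > 0" and u: "u \<in> Fpn p n" and v: "v \<in> Fpn p n"
  have "{v'\<in>Fpn p n. vadd p u v' = vadd p u v} = {v}"
  proof (intro equalityI subsetI)
    fix w assume "w \<in> {v'\<in>Fpn p n. vadd p u v' = vadd p u v}"
    then show "w \<in> {v}" using vadd_cancel[OF p v, of w u] by auto
  qed (use v in auto)
  then show ?thesis unfolding translate_def using vadd_Fpn[OF p u v] by simp
qed

lemma periodic: "p > 0 \<Longrightarrow> u \<in> Stab p n x \<Longrightarrow> v \<in> Fpn p n \<Longrightarrow> x (vadd p u v) = x v"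
  using translate_single[of p u n v x] vadd_Fpn[of p u n v] unfolding Stab_def by auto

lemma vzero_Stab: "p > 0 \<Longrightarrow> vzero \<in> Stab p n x"
proof -
  assume p: "p > 0"
  have z: "vzero \<in> Fpn p n" using p by (auto simp: Fpn_def vzero_def)
  have va: "vadd p vzero v = v" if "v \<in> Fpn p n" for v
    using Fpn_mod[OF that p] by (auto simp: vadd_def vzero_def)
  have "translate p n vzero x w = x w" if w: "w \<in> Fpn p n" for w
    using translate_single[OF p z w, of x] va[OF w] by simp
  then show ?thesis unfolding Stab_def using z by blast
qed

definition gg :: "nat \<Rightarrow> (nat \<Rightarrow> int) \<Rightarrow> (nat \<Rightarrow> int) \<Rightarrow> nat \<Rightarrow> (nat \<Rightarrow> int)" where
  "gg p u t k = (\<lambda>i. (t i + int k * u i) mod int p)"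

lemma gg_Fpn: assumes "p > 0" "u \<in> Fpn p n" "t \<in> Fpn p n" shows "gg p u t k \<in> Fpn p n"
proof -
  have "int p > 0" using assms(1) by simp
  then show ?thesis using assms(2,3) unfolding Fpn_def gg_def by auto
qed

lemma gg_Suc: "gg p u t (Suc k) = vadd p u (gg p u t k)"
  unfolding gg_def vadd_def by (auto simp: fun_eq_iff mod_simps algebra_simps)

lemma gg_periodic: "p > 0 \<Longrightarrow> u \<in> Stab p n x \<Longrightarrow> t \<in> Fpn p n \<Longrightarrow> x (gg p u t k) = x t"
proof (induction k)
  case 0
  then show ?case using Fpn_mod[OF 0(3) 0(1)] by (simp add: gg_def)
next
  case (Suc k)
  have u: "u \<in> Fpn p n" using Suc(3) by (simp add: Stab_def)
  show ?case using Suc periodic[OF Suc(2,3) gg_Fpn[OF Suc(2) u Suc(4)]] gg_Suc by metis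
qed


lemma gg_vadd: "gg p u t k = vadd p (\<lambda>i. int k * u i) t"
  unfolding gg_def vadd_def by (simp add: add.commute)

lemma bij_gg:
  assumes pr: "prime p" and u: "u \<in> Fpn p n" and j: "j < n" and uj: "u j \<noteq> 0"
  shows "bij_betw (\<lambda>(t,k). gg p u t k) ({t\<in>Fpn p n. t j = 0} \<times> {..<p}) (Fpn p n)"
proof -
  have p: "p > 0" using pr prime_gt_0_nat by blast
  have ujr: "0 < u j" "u j < int p" using u j uj unfolding Fpn_def by force+
  have ndvd: "\<not> int p dvd u j" using ujr zdvd_not_zless by blast
  have pri: "prime (int p)" using pr by simp
  show ?thesis
  proof (rule bij_betw_imageI)
    show "inj_on (\<lambda>(t,k). gg p u t k) ({t\<in>Fpn p n. t j = 0} \<times> {..<p})"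
    proof (rule inj_onI, clarify)
      fix t k t' k'
      assume t: "t \<in> Fpn p n" "t j = 0" "k < p" and t': "t' \<in> Fpn p n" "t' j = 0" "k' < p"
        and e: "gg p u t k = gg p u t' k'"
      have "(int k * u j) mod p = (int k' * u j) mod p"
        using fun_cong[OF e, of j] t t' by (simp add: gg_def)
      then have "int p dvd (int k - int k') * u j"
        by (metis mod_eq_dvd_iff left_diff_distrib)
      then have "int p dvd (int k - int k')"
        using pri ndvd prime_dvd_mult_iff by blast
      moreover have "\<bar>int k - int k'\<bar> < int p" using t(3) t'(3) by linarith
      ultimately have "int k - int k' = 0"
        using dvd_imp_le_int[of "int k - int k'" "int p"] by fastforce
      then have kk: "k = k'" by simp
      show "t = t' \<and> k = k'"
        using vadd_cancel[OF p t(1) t'(1)] e kk by (simp add: gg_vadd)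
    qed
  next
    show "(\<lambda>(t,k). gg p u t k) ` ({t\<in>Fpn p n. t j = 0} \<times> {..<p}) = Fpn p n"
    proof (intro equalityI subsetI)
      fix w assume "w \<in> (\<lambda>(t,k). gg p u t k) ` ({t\<in>Fpn p n. t j = 0} \<times> {..<p})"
      then show "w \<in> Fpn p n" using gg_Fpn[OF p u] by auto
    next
      fix w assume w: "w \<in> Fpn p n"
      have "coprime (u j) (int p)" using pri ndvd
        by (simp add: prime_imp_coprime coprime_commute)
      then obtain a where a: "[u j * a = 1] (mod int p)" using cong_solve_coprime_int by blast
      define k where "k = nat ((w j * a) mod p)"
      have kp: "k < p" using p unfolding k_def by (simp add: nat_less_iff)
      have ik: "int k = (w j * a) mod p" using p unfolding k_def by simp
      define t where "t = (\<lambda>i. (w i - int k * u i) mod int p)"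
      have tF: "t \<in> Fpn p n" using w u p unfolding t_def Fpn_def by auto
      have "[int k * u j = w j * a * u j] (mod int p)" unfolding ik
        by (simp add: cong_def mod_simps)
      also have "[w j * a * u j = w j * 1] (mod int p)"
        using a by (metis cong_scalar_left mult.assoc mult.commute)
      finally have "[w j - int k * u j = 0] (mod int p)"
        by (simp add: cong_iff_dvd_diff cong_sym_eq) (metis dvd_minus_iff minus_diff_eq)
      then have tj: "t j = 0" unfolding t_def cong_def by simp
      have "gg p u t k = w" unfolding gg_def t_def
        using Fpn_mod[OF w p] by (simp add: fun_eq_iff mod_simps)
      then show "w \<in> (\<lambda>(t,k). gg p u t k) ` ({t\<in>Fpn p n. t j = 0} \<times> {..<p})"
        using tF tj kp by force
    qed
  qed
qed


lemma inner_mod: "(\<Sum>k<p. (a + int k * b) mod int p) mod int p = (b * (\<Sum>k<p. int k)) mod int p"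
proof -
  have "(\<Sum>k<p. (a + int k * b) mod int p) mod int p = (\<Sum>k<p. (a + int k * b)) mod int p"
    by (rule mod_sum_eq)
  also have "(\<Sum>k<p. (a + int k * b)) = int p * a + b * (\<Sum>k<p. int k)"
    by (simp add: sum.distrib sum_distrib_left sum_distrib_right mult.commute)
  finally show ?thesis by (simp add: mod_simps)
qed

lemma two_K: "2 * (\<Sum>k<m. int k) = int m * (int m - 1)"
  by (induction m) (auto simp: algebra_simps)

lemma key:
  assumes pr: "prime p" and uS: "u \<in> Stab p n x" and j: "j < n" and uj: "u j \<noteq> 0"
  shows "(\<Sum>w\<in>Fpn p n. x w * w i) mod int p
           = ((\<Sum>t\<in>{t\<in>Fpn p n. t j = 0}. x t) * u i * (\<Sum>k<p. int k)) mod int p"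
    and "(\<Sum>w\<in>Fpn p n. x w) = (\<Sum>t\<in>{t\<in>Fpn p n. t j = 0}. x t) * int p"
proof -
  let ?T = "{t\<in>Fpn p n. t j = 0}"
  let ?K = "\<Sum>k<p. int k"
  have p: "p > 0" using pr prime_gt_0_nat by blast
  have u: "u \<in> Fpn p n" using uS by (simp add: Stab_def)
  have bij: "bij_betw (\<lambda>(t,k). gg p u t k) (?T \<times> {..<p}) (Fpn p n)"
    by (rule bij_gg[OF pr u j uj])
  have re: "sum h (Fpn p n) = (\<Sum>t\<in>?T. \<Sum>k<p. h (gg p u t k))" for h :: "(nat \<Rightarrow> int) \<Rightarrow> int"
  proof -
    have "sum h (Fpn p n) = (\<Sum>z\<in>?T \<times> {..<p}. h ((\<lambda>(t,k). gg p u t k) z))"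
      using sum.reindex_bij_betw[OF bij, of h] by simp
    also have "\<dots> = (\<Sum>t\<in>?T. \<Sum>k<p. h (gg p u t k))"
      by (subst sum.cartesian_product) (simp add: case_prod_beta)
    finally show ?thesis .
  qed
  have xg: "x (gg p u t k) = x t" if "t \<in> ?T" for t k
    using gg_periodic[OF p uS] that by blast
  have "(\<Sum>w\<in>Fpn p n. x w * w i) = (\<Sum>t\<in>?T. \<Sum>k<p. x t * ((t i + int k * u i) mod int p))"
    using re[of "\<lambda>w. x w * w i"] xg by (simp add: gg_def)
  also have "\<dots> = (\<Sum>t\<in>?T. x t * (\<Sum>k<p. (t i + int k * u i) mod int p))"
    by (simp add: sum_distrib_left)
  finally have S: "(\<Sum>w\<in>Fpn p n. x w * w i) = (\<Sum>t\<in>?T. x t * (\<Sum>k<p. (t i + int k * u i) mod int p))" .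
  have trm: "(x t * (\<Sum>k<p. (t i + int k * u i) mod int p)) mod int p = (x t * (u i * ?K)) mod int p" for t
    by (metis mod_mult_right_eq inner_mod)
  have "(\<Sum>w\<in>Fpn p n. x w * w i) mod int p
      = (\<Sum>t\<in>?T. (x t * (\<Sum>k<p. (t i + int k * u i) mod int p)) mod int p) mod int p"
    unfolding S by (simp only: mod_sum_eq)
  also have "\<dots> = (\<Sum>t\<in>?T. (x t * (u i * ?K)) mod int p) mod int p"
    by (simp only: trm)
  also have "\<dots> = (\<Sum>t\<in>?T. x t * (u i * ?K)) mod int p"
    by (simp only: mod_sum_eq)
  also have "\<dots> = ((\<Sum>t\<in>?T. x t) * u i * ?K) mod int p"
    by (simp add: sum_distrib_right mult.assoc)
  finally show "(\<Sum>w\<in>Fpn p n. x w * w i) mod int p = ((\<Sum>t\<in>?T. x t) * u i * ?K) mod int p" .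
  show "(\<Sum>w\<in>Fpn p n. x w) = (\<Sum>t\<in>?T. x t) * int p"
    using re[of x] xg by (simp add: sum_distrib_left[symmetric] mult.commute)
qed

theorem lemma14p2:
  fixes p n :: nat and x :: "(nat \<Rightarrow> int) \<Rightarrow> int"
  assumes "prime p"
  shows "((odd p \<or> (4::int) dvd (\<Sum>v\<in>Fpn p n. x v)) \<longrightarrow> Stab p n x \<noteq> {vzero} \<longrightarrow> wsum p n x = vzero) \<and>
         ((\<Sum>v\<in>Fpn p n. x v) = 0 \<longrightarrow> wsum p n x \<noteq> vzero \<longrightarrow> Stab p n x = {vzero})"
proof -
  have p: "p > 0" using assms prime_gt_0_nat by blast
  have p2: "p \<ge> 2" using assms prime_ge_2_nat by blast
  have A: "wsum p n x = vzero" if h: "odd p \<or> (4::int) dvd (\<Sum>v\<in>Fpn p n. x v)"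
    and st: "Stab p n x \<noteq> {vzero}"
  proof -
    obtain u where uS: "u \<in> Stab p n x" and uz: "u \<noteq> vzero"
      using st vzero_Stab[OF p, of n x] by blast
    have u: "u \<in> Fpn p n" using uS by (simp add: Stab_def)
    obtain j where uj: "u j \<noteq> 0" using uz unfolding vzero_def by auto
    have j: "j < n" using u uj unfolding Fpn_def by (metis (mono_tags, lifting) mem_Collect_eq not_le)
    let ?X = "\<Sum>t\<in>{t\<in>Fpn p n. t j = 0}. x t"
    let ?K = "\<Sum>k<p. int k"
    show ?thesis unfolding wsum_def vzero_def
    proof
      fix i
      have k1: "(\<Sum>w\<in>Fpn p n. x w * w i) mod int p = (?X * u i * ?K) mod int p"
        by (rule key(1)[OF assms uS j uj])
      have k2: "(\<Sum>w\<in>Fpn p n. x w) = ?X * int p" by (rule key(2)[OF assms uS j uj])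
      have "int p dvd ?X * u i * ?K"
      proof (cases "odd p")
        case True
        have "int p dvd 2 * ?K" unfolding two_K by simp
        moreover have "\<not> int p dvd 2"
          using True p2 by (metis dvd_antisym even_numeral int_dvd_int_iff of_nat_numeral dvd_refl
              le_antisym dvd_imp_le zero_less_numeral)
        ultimately have "int p dvd ?K"
          using assms prime_dvd_mult_iff[of "int p" 2 ?K] by simp
        then show ?thesis by simp
      next
        case False
        then have p2': "p = 2" using assms prime_prime_factor two_is_prime_nat primes_dvd_imp_eq by blast
        then have "(4::int) dvd ?X * 2" using h k2 False by simp
        then have "2 dvd ?X" by presburger
        then show ?thesis using p2' by simp
      qed
      then show "(\<Sum>w\<in>Fpn p n. x w * w i) mod int p = 0" using k1 by simp
    qed
  qed
  show ?thesis
  proof (intro conjI impI)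
    show "wsum p n x = vzero" if "odd p \<or> (4::int) dvd (\<Sum>v\<in>Fpn p n. x v)" "Stab p n x \<noteq> {vzero}"
      using A that by blast
    show "Stab p n x = {vzero}" if "(\<Sum>v\<in>Fpn p n. x v) = 0" "wsum p n x \<noteq> vzero"
      using A that by auto
  qed
qed

end
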